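(* Let $G:\mathbb{R}^2\to\mathbb{R}$ and constants $L\ge c>0$ satisfy, for all $u,u_0,v\in\mathbb{R}$, $|G(u,v)-G(u_0,v)|\le L|u-u_0|$ and $|G(u,v)|\ge c\sqrt{u^2+v^2}$. Let $n,m\ge1$, fix $i\in\{1,\dots,n\}$, and let $f\in L^2((0,1)^n)$ (not a.e. constant) and $h\in L^2((0,1)^{n+m-1})$ be real-valued. Suppose $g\in L^2((0,1)^{n+m})$ satisfies $g(x,\xi)=G(f(x),h(x_{\sim i},\xi))$, with mean $g_0=\int g$, and that $c^2(\mathrm{Var}(f)+\mathrm{Var}(h))-g_0^2>0$. Then $$S^g_{T_{x_i}}\le\frac{2L^2\,\mathrm{Var}(f)}{c^2(\mathrm{Var}(f)+\mathrm{Var}(h))-g_0^2}\,S^f_{T_{x_i}}.$$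
   Context: All integrals are with respect to Lebesgue measure over unit cubes (inputs independent, uniform on $[0,1]$). $x_{\sim i}=(x_1,\dots,x_{i-1},x_{i+1},\dots,x_n)$. For $\varphi$, $\varphi_0=\int\varphi$ and $\mathrm{Var}(\varphi)=\int\varphi^2-\varphi_0^2$. The total Sobol index of $x_i$ for a square-integrable $\varphi$ of $(x,y)$ is $$S^\varphi_{T_{x_i}}=\frac{\int\varphi^2\,dx\,dy-\int\big(\int\varphi\,dx_i\big)^2dx_{\sim i}\,dy}{\mathrm{Var}(\varphi)}.$$ *)

theory Defs
  imports "HOL-Analysis.Analysis"
begin

definition unitI :: "real measure" where
  "unitI = restrict_space lborel {0..1}"

text \<open>Lebesgue measure on the unit cube indexed by a finite index set I
  (points are extensional functions I \<rightarrow> real).\<close>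
definition cube :: "nat set \<Rightarrow> (nat \<Rightarrow> real) measure" where
  "cube I = (\<Pi>\<^sub>M j\<in>I. unitI)"

definition variance :: "'a measure \<Rightarrow> ('a \<Rightarrow> real) \<Rightarrow> real" where
  "variance M \<phi> = (\<integral>z. (\<phi> z)\<^sup>2 \<partial>M) - (\<integral>z. \<phi> z \<partial>M)\<^sup>2"

text \<open>Total Sobol index of x_i for a function of x \<in> (0,1)^n (coordinates 1..n).\<close>
definition sobolT :: "nat \<Rightarrow> nat \<Rightarrow> ((nat \<Rightarrow> real) \<Rightarrow> real) \<Rightarrow> real" where
  "sobolT n i \<phi> =
     ((\<integral>x. (\<phi> x)\<^sup>2 \<partial>cube {1..n})
      - (\<integral>y. (\<integral>t. \<phi> (y(i := t)) \<partial>unitI)\<^sup>2 \<partial>cube ({1..n} - {i})))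
     / variance (cube {1..n}) \<phi>"

text \<open>Total Sobol index of x_i for a function of (x,\<xi>) \<in> (0,1)^n \<times> (0,1)^m.\<close>
definition sobolT2 :: "nat \<Rightarrow> nat \<Rightarrow> nat \<Rightarrow> ((nat \<Rightarrow> real) \<Rightarrow> (nat \<Rightarrow> real) \<Rightarrow> real) \<Rightarrow> real" where
  "sobolT2 n m i \<phi> =
     ((\<integral>z. (\<phi> (fst z) (snd z))\<^sup>2 \<partial>(cube {1..n} \<Otimes>\<^sub>M cube {1..m}))
      - (\<integral>z. (\<integral>t. \<phi> ((fst z)(i := t)) (snd z) \<partial>unitI)\<^sup>2
            \<partial>(cube ({1..n} - {i}) \<Otimes>\<^sub>M cube {1..m})))
     / variance (cube {1..n} \<Otimes>\<^sub>M cube {1..m}) (\<lambda>z. \<phi> (fst z) (snd z))"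

end

theory Submission
  imports Defs "HOL-Probability.Probability"
begin

lemma unitI_prob: "prob_space unitI"
  unfolding unitI_def by (rule prob_space_restrict_space) auto

lemma cube_prob: "prob_space (cube I)"
  unfolding cube_def by (rule prob_space_PiM) (rule unitI_prob)

lemma unitI_psf: "product_sigma_finite (\<lambda>_. unitI)"
  unfolding product_sigma_finite_def using unitI_prob prob_space_imp_sigma_finite by blast

lemma cube_sf: "sigma_finite_measure (cube I)"
  using cube_prob prob_space_imp_sigma_finite by blast

lemma unitI_sf: "sigma_finite_measure unitI"
  using unitI_prob prob_space_imp_sigma_finite by blast

lemma cube_psf: "pair_sigma_finite (cube I) (cube K)"
  unfolding pair_sigma_finite_def using cube_sf by blast

lemma Phi_meas:
  assumes i: "i \<in> {1..n}"
  shows "(\<lambda>w. ((fst (fst w))(i := snd w), snd (fst w))) \<in>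
     measurable ((cube ({1..n}-{i}) \<Otimes>\<^sub>M cube {1..m}) \<Otimes>\<^sub>M unitI) (cube {1..n} \<Otimes>\<^sub>M cube {1..m})"
proof -
  have I: "{1..n} = ({1..n}-{i}) \<union> {i}" using i by auto
  have "(\<lambda>w. (fst (fst w))(i := snd w)) \<in> measurable ((cube ({1..n}-{i}) \<Otimes>\<^sub>M cube {1..m}) \<Otimes>\<^sub>M unitI) (cube {1..n})"
    unfolding cube_def by (rule measurable_fun_upd[OF I]) (auto simp: cube_def[symmetric])
  then show ?thesis by (intro measurable_Pair) auto
qed

lemma T3:
  fixes F :: "(nat\<Rightarrow>real)\<times>(nat\<Rightarrow>real) \<Rightarrow> ennreal"
  assumes i: "i \<in> {1..n}" and F[measurable]: "F \<in> borel_measurable (cube{1..n} \<Otimes>\<^sub>M cube{1..m})"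
  shows "(\<integral>\<^sup>+z. F z \<partial>(cube{1..n} \<Otimes>\<^sub>M cube{1..m}))
       = (\<integral>\<^sup>+z. (\<integral>\<^sup>+t. F ((fst z)(i:=t), snd z) \<partial>unitI) \<partial>(cube({1..n}-{i}) \<Otimes>\<^sub>M cube {1..m}))"
proof -
  let ?J = "{1..n}-{i}"
  have ins: "insert i ?J = {1..n}" using i by auto
  interpret P1: pair_sigma_finite "cube{1..n}" "cube{1..m}" by (rule cube_psf)
  interpret P2: pair_sigma_finite "cube ?J" "cube{1..m}" by (rule cube_psf)
  interpret U: sigma_finite_measure unitI by (rule unitI_sf)
  interpret PS: product_sigma_finite "\<lambda>_. unitI" by (rule unitI_psf)
  have Phi: "(\<lambda>w. F ((fst (fst w))(i := snd w), snd (fst w))) \<in> borel_measurable ((cube ?J \<Otimes>\<^sub>M cube {1..m}) \<Otimes>\<^sub>M unitI)"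
    using measurable_comp[OF Phi_meas[OF i] F] by (simp add: comp_def)
  have inner_meas: "(\<lambda>z. \<integral>\<^sup>+t. F ((fst z)(i:=t), snd z) \<partial>unitI) \<in> borel_measurable (cube ?J \<Otimes>\<^sub>M cube {1..m})"
    using U.borel_measurable_nn_integral_fst[OF Phi] by simp
  have "(\<integral>\<^sup>+z. F z \<partial>(cube{1..n} \<Otimes>\<^sub>M cube{1..m})) = (\<integral>\<^sup>+\<xi>. (\<integral>\<^sup>+x. F (x, \<xi>) \<partial>cube{1..n}) \<partial>cube{1..m})"
    by (rule P1.nn_integral_snd[symmetric]) (rule F)
  also have "\<dots> = (\<integral>\<^sup>+\<xi>. (\<integral>\<^sup>+y. (\<integral>\<^sup>+t. F (y(i:=t), \<xi>) \<partial>unitI) \<partial>cube ?J) \<partial>cube{1..m})"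
  proof (rule nn_integral_cong)
    fix \<xi> assume \<xi>: "\<xi> \<in> space (cube {1..m})"
    have "(\<lambda>x. F (x, \<xi>)) \<in> borel_measurable (cube {1..n})"
      using measurable_comp[OF measurable_Pair2'[OF \<xi>] F] by (simp add: comp_def)
    then have "(\<lambda>x. F (x, \<xi>)) \<in> borel_measurable (Pi\<^sub>M (insert i ?J) (\<lambda>_. unitI))"
      unfolding ins cube_def .
    then show "(\<integral>\<^sup>+x. F (x, \<xi>) \<partial>cube{1..n}) = (\<integral>\<^sup>+y. (\<integral>\<^sup>+t. F (y(i:=t), \<xi>) \<partial>unitI) \<partial>cube ?J)"
      using PS.product_nn_integral_insert[of ?J i "\<lambda>x. F (x, \<xi>)"] unfolding ins cube_def by simp
  qed
  also have "\<dots> = (\<integral>\<^sup>+z. (\<integral>\<^sup>+t. F ((fst z)(i:=t), snd z) \<partial>unitI) \<partial>(cube ?J \<Otimes>\<^sub>M cube {1..m}))"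
    using P2.nn_integral_snd[OF inner_meas] by simp
  finally show ?thesis .
qed

lemma T3B:
  fixes F :: "(nat\<Rightarrow>real)\<times>(nat\<Rightarrow>real) \<Rightarrow> real"
  assumes i: "i \<in> {1..n}" and F: "integrable (cube{1..n} \<Otimes>\<^sub>M cube{1..m}) F"
    and nn: "\<And>z. 0 \<le> F z"
  shows "AE z in cube({1..n}-{i}) \<Otimes>\<^sub>M cube {1..m}. integrable unitI (\<lambda>t. F ((fst z)(i:=t), snd z))"
    and "integrable (cube({1..n}-{i}) \<Otimes>\<^sub>M cube {1..m}) (\<lambda>z. \<integral>t. F ((fst z)(i:=t), snd z) \<partial>unitI)"
    and "integral\<^sup>L (cube{1..n} \<Otimes>\<^sub>M cube{1..m}) F
          = (\<integral>z. (\<integral>t. F ((fst z)(i:=t), snd z) \<partial>unitI) \<partial>(cube({1..n}-{i}) \<Otimes>\<^sub>M cube {1..m}))"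
proof -
  let ?J = "{1..n}-{i}"
  let ?P = "cube ?J \<Otimes>\<^sub>M cube {1..m}"
  interpret U: sigma_finite_measure unitI by (rule unitI_sf)
  have Fm[measurable]: "F \<in> borel_measurable (cube{1..n} \<Otimes>\<^sub>M cube{1..m})" using F by auto
  have Phi: "(\<lambda>w. F ((fst (fst w))(i := snd w), snd (fst w))) \<in> borel_measurable (?P \<Otimes>\<^sub>M unitI)"
    using measurable_comp[OF Phi_meas[OF i] Fm] by (simp add: comp_def)
  have Phi': "(\<lambda>w. ennreal (F ((fst (fst w))(i := snd w), snd (fst w)))) \<in> borel_measurable (?P \<Otimes>\<^sub>M unitI)"
    using Phi by measurable
  have sec: "(\<lambda>t. F ((fst z)(i:=t), snd z)) \<in> borel_measurable unitI" if "z \<in> space ?P" for z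
    using measurable_comp[OF measurable_Pair1'[OF that] Phi] by (simp add: comp_def)
  have inner_meas: "(\<lambda>z. \<integral>\<^sup>+t. ennreal (F ((fst z)(i:=t), snd z)) \<partial>unitI) \<in> borel_measurable ?P"
    using U.borel_measurable_nn_integral_fst[OF Phi'] by simp
  have innerL_meas: "(\<lambda>z. \<integral>t. F ((fst z)(i:=t), snd z) \<partial>unitI) \<in> borel_measurable ?P"
    using U.borel_measurable_lebesgue_integral[of "\<lambda>z t. F ((fst z)(i:=t), snd z)" ?P] Phi
    by (simp add: split_beta')
  have eq: "(\<integral>\<^sup>+z. ennreal (F z) \<partial>(cube{1..n} \<Otimes>\<^sub>M cube{1..m}))
       = (\<integral>\<^sup>+z. (\<integral>\<^sup>+t. ennreal (F ((fst z)(i:=t), snd z)) \<partial>unitI) \<partial>?P)"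
    by (rule T3[OF i]) measurable
  have fin: "(\<integral>\<^sup>+z. ennreal (F z) \<partial>(cube{1..n} \<Otimes>\<^sub>M cube{1..m})) = ennreal (integral\<^sup>L (cube{1..n} \<Otimes>\<^sub>M cube{1..m}) F)"
    by (rule nn_integral_eq_integral[OF F]) (simp add: nn)
  have AEfin: "AE z in ?P. (\<integral>\<^sup>+t. ennreal (F ((fst z)(i:=t), snd z)) \<partial>unitI) \<noteq> \<infinity>"
    by (rule nn_integral_PInf_AE[OF inner_meas]) (metis eq fin ennreal_neq_top infinity_ennreal_def)
  show AEint: "AE z in ?P. integrable unitI (\<lambda>t. F ((fst z)(i:=t), snd z))"
    using AEfin AE_space
  proof eventually_elim
    case (elim z)
    then show ?case using sec[OF elim(2)] nn
      by (auto simp: integrable_iff_bounded less_top)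
  qed
  have AEeq: "AE z in ?P. ennreal (\<integral>t. F ((fst z)(i:=t), snd z) \<partial>unitI) = (\<integral>\<^sup>+t. ennreal (F ((fst z)(i:=t), snd z)) \<partial>unitI)"
    using AEint by eventually_elim (rule nn_integral_eq_integral[symmetric], auto simp: nn)
  have hb: "has_bochner_integral ?P (\<lambda>z. \<integral>t. F ((fst z)(i:=t), snd z) \<partial>unitI) (integral\<^sup>L (cube{1..n} \<Otimes>\<^sub>M cube{1..m}) F)"
  proof (rule has_bochner_integral_nn_integral[OF innerL_meas])
    show "AE x in ?P. 0 \<le> (\<integral>t. F ((fst x)(i:=t), snd x) \<partial>unitI)"
      by (auto intro!: integral_nonneg_AE simp: nn)
    show "0 \<le> integral\<^sup>L (cube{1..n} \<Otimes>\<^sub>M cube{1..m}) F" by (auto intro!: integral_nonneg_AE simp: nn)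
    show "(\<integral>\<^sup>+z. ennreal (\<integral>t. F ((fst z)(i:=t), snd z) \<partial>unitI) \<partial>?P) = ennreal (integral\<^sup>L (cube{1..n} \<Otimes>\<^sub>M cube{1..m}) F)"
      using nn_integral_cong_AE[OF AEeq] eq fin by simp
  qed
  then show "integrable ?P (\<lambda>z. \<integral>t. F ((fst z)(i:=t), snd z) \<partial>unitI)" by (auto simp: integrable.simps)
  from hb show "integral\<^sup>L (cube{1..n} \<Otimes>\<^sub>M cube{1..m}) F = (\<integral>z. (\<integral>t. F ((fst z)(i:=t), snd z) \<partial>unitI) \<partial>?P)"
    by (simp add: has_bochner_integral_integral_eq)
qed

lemma marg:
  fixes F :: "(nat \<Rightarrow> real) \<Rightarrow> real"
  assumes F: "F \<in> borel_measurable (cube I)"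
  shows "(\<integral>z. F (fst z) \<partial>(cube I \<Otimes>\<^sub>M cube K)) = integral\<^sup>L (cube I) F"
    and "integrable (cube I \<Otimes>\<^sub>M cube K) (\<lambda>z. F (fst z)) \<longleftrightarrow> integrable (cube I) F"
proof -
  have d: "distr (cube I \<Otimes>\<^sub>M cube K) (cube I) fst = cube I"
    by (rule prob_space.distr_pair_fst[OF cube_prob])
  show "(\<integral>z. F (fst z) \<partial>(cube I \<Otimes>\<^sub>M cube K)) = integral\<^sup>L (cube I) F"
    using integral_distr[OF measurable_fst[of "cube I" "cube K"] F] d by simp
  show "integrable (cube I \<Otimes>\<^sub>M cube K) (\<lambda>z. F (fst z)) \<longleftrightarrow> integrable (cube I) F"
    using integrable_distr_eq[OF measurable_fst[of "cube I" "cube K"] F] d by simp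
qed

lemma var_expand:
  fixes \<psi> :: "'a \<Rightarrow> real"
  assumes P: "prob_space M" and m: "\<psi> \<in> borel_measurable M" and sq: "integrable M (\<lambda>t. (\<psi> t)\<^sup>2)"
  shows "(\<integral>t. (\<psi> t - k)\<^sup>2 \<partial>M) = (\<integral>t. (\<psi> t)\<^sup>2 \<partial>M) - (\<integral>t. \<psi> t \<partial>M)\<^sup>2 + ((\<integral>t. \<psi> t \<partial>M) - k)\<^sup>2"
proof -
  interpret prob_space M by (rule P)
  have int: "integrable M \<psi>" by (rule square_integrable_imp_integrable[OF m sq])
  have "(\<integral>t. (\<psi> t - k)\<^sup>2 \<partial>M) = (\<integral>t. (\<psi> t)\<^sup>2 - 2 * k * \<psi> t + k\<^sup>2 \<partial>M)"
    by (simp add: power2_diff algebra_simps)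
  also have "\<dots> = (\<integral>t. (\<psi> t)\<^sup>2 \<partial>M) - 2 * k * (\<integral>t. \<psi> t \<partial>M) + k\<^sup>2"
    using int sq by (simp add: prob_space)
  finally show ?thesis by (simp add: power2_diff algebra_simps)
qed

lemma core:
  fixes \<phi> \<psi> :: "'a \<Rightarrow> real"
  assumes P: "prob_space M" and m: "\<phi> \<in> borel_measurable M" "\<psi> \<in> borel_measurable M"
    and sq: "integrable M (\<lambda>t. (\<phi> t)\<^sup>2)" "integrable M (\<lambda>t. (\<psi> t)\<^sup>2)"
    and L: "L \<ge> 0"
    and b: "\<And>t. t \<in> space M \<Longrightarrow> \<bar>\<psi> t - k\<bar> \<le> L * \<bar>\<phi> t - (\<integral>s. \<phi> s \<partial>M)\<bar>"
  shows "(\<integral>t. (\<psi> t)\<^sup>2 \<partial>M) - (\<integral>t. \<psi> t \<partial>M)\<^sup>2 \<le> L\<^sup>2 * ((\<integral>t. (\<phi> t)\<^sup>2 \<partial>M) - (\<integral>t. \<phi> t \<partial>M)\<^sup>2)"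
    and "0 \<le> (\<integral>t. (\<phi> t)\<^sup>2 \<partial>M) - (\<integral>t. \<phi> t \<partial>M)\<^sup>2"
    and "0 \<le> (\<integral>t. (\<psi> t)\<^sup>2 \<partial>M) - (\<integral>t. \<psi> t \<partial>M)\<^sup>2"
proof -
  interpret prob_space M by (rule P)
  let ?\<mu> = "\<integral>s. \<phi> s \<partial>M"
  note e1 = var_expand[OF P m(2) sq(2), of k]
  note e2 = var_expand[OF P m(1) sq(1), of ?\<mu>]
  have i1: "integrable M (\<lambda>t. (\<psi> t - k)\<^sup>2)" "integrable M (\<lambda>t. (\<phi> t - ?\<mu>)\<^sup>2)"
    using square_integrable_imp_integrable[OF m(1) sq(1)] square_integrable_imp_integrable[OF m(2) sq(2)] sq
    by (simp_all add: power2_diff)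
  have "(\<integral>t. (\<psi> t - k)\<^sup>2 \<partial>M) \<le> (\<integral>t. L\<^sup>2 * (\<phi> t - ?\<mu>)\<^sup>2 \<partial>M)"
  proof (rule integral_mono)
    show "integrable M (\<lambda>t. L\<^sup>2 * (\<phi> t - ?\<mu>)\<^sup>2)" using i1(2) by simp
    fix t assume t: "t \<in> space M"
    have "\<bar>\<psi> t - k\<bar>\<^sup>2 \<le> (L * \<bar>\<phi> t - ?\<mu>\<bar>)\<^sup>2"
      using b[OF t] by (intro power_mono) auto
    then show "(\<psi> t - k)\<^sup>2 \<le> L\<^sup>2 * (\<phi> t - ?\<mu>)\<^sup>2" by (simp add: power_mult_distrib)
  qed (rule i1(1))
  also have "\<dots> = L\<^sup>2 * (\<integral>t. (\<phi> t - ?\<mu>)\<^sup>2 \<partial>M)" by simp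
  finally have *: "(\<integral>t. (\<psi> t - k)\<^sup>2 \<partial>M) \<le> L\<^sup>2 * (\<integral>t. (\<phi> t - ?\<mu>)\<^sup>2 \<partial>M)" .
  have n1: "0 \<le> (\<integral>t. (\<phi> t - ?\<mu>)\<^sup>2 \<partial>M)" by simp
  have n2: "0 \<le> (\<integral>t. (\<psi> t - (\<integral>s. \<psi> s \<partial>M))\<^sup>2 \<partial>M)" by simp
  show "0 \<le> (\<integral>t. (\<phi> t)\<^sup>2 \<partial>M) - (\<integral>t. \<phi> t \<partial>M)\<^sup>2" using n1 e2 by simp
  show "0 \<le> (\<integral>t. (\<psi> t)\<^sup>2 \<partial>M) - (\<integral>t. \<psi> t \<partial>M)\<^sup>2"
    using n2 var_expand[OF P m(2) sq(2), of "\<integral>s. \<psi> s \<partial>M"] by simp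
  show "(\<integral>t. (\<psi> t)\<^sup>2 \<partial>M) - (\<integral>t. \<psi> t \<partial>M)\<^sup>2 \<le> L\<^sup>2 * ((\<integral>t. (\<phi> t)\<^sup>2 \<partial>M) - (\<integral>t. \<phi> t \<partial>M)\<^sup>2)"
  proof -
    have "(\<integral>t. (\<psi> t)\<^sup>2 \<partial>M) - (\<integral>t. \<psi> t \<partial>M)\<^sup>2 \<le> (\<integral>t. (\<psi> t - k)\<^sup>2 \<partial>M)"
      using e1 zero_le_power2[of "(\<integral>t. \<psi> t \<partial>M) - k"] by linarith
    also have "\<dots> \<le> L\<^sup>2 * (\<integral>t. (\<phi> t - ?\<mu>)\<^sup>2 \<partial>M)" by (rule *)
    also have "(\<integral>t. (\<phi> t - ?\<mu>)\<^sup>2 \<partial>M) = (\<integral>t. (\<phi> t)\<^sup>2 \<partial>M) - (\<integral>t. \<phi> t \<partial>M)\<^sup>2"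
      using e2 by simp
    finally show ?thesis .
  qed
qed

lemma space_unitI: "space unitI = {0..1}"
  unfolding unitI_def by simp

lemma space_cube: "space (cube I) = (\<Pi>\<^sub>E j\<in>I. {0..1})"
  unfolding cube_def by (simp add: space_PiM space_unitI)

lemma upd_space: "y \<in> space (cube J) \<Longrightarrow> t \<in> {0..1} \<Longrightarrow> y(i:=t) \<in> space (cube (insert i J))"
  unfolding space_cube by (auto simp: PiE_iff extensional_def)

lemma restr_upd: "y \<in> space (cube J) \<Longrightarrow> i \<notin> J \<Longrightarrow> restrict (y(i:=t)) J = y"
  unfolding space_cube by (auto simp: PiE_iff extensional_def restrict_def fun_eq_iff)

lemma restr_meas: "J \<subseteq> K \<Longrightarrow> (\<lambda>z. (restrict (fst z) J, snd z)) \<in> measurable (cube K \<Otimes>\<^sub>M N) (cube J \<Otimes>\<^sub>M N)"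
proof -
  assume "J \<subseteq> K"
  then have "(\<lambda>x. restrict x J) \<in> measurable (cube K) (cube J)"
    unfolding cube_def by (rule measurable_restrict_subset)
  then show ?thesis by (intro measurable_Pair) (auto intro: measurable_comp[OF measurable_fst, unfolded comp_def])
qed

lemma upd_meas2:
  assumes i: "i \<in> {1..n}"
  shows "(\<lambda>w. (fst w)(i := snd w)) \<in> measurable (cube ({1..n}-{i}) \<Otimes>\<^sub>M unitI) (cube {1..n})"
proof -
  have I: "{1..n} = ({1..n}-{i}) \<union> {i}" using i by auto
  show ?thesis
    unfolding cube_def by (rule measurable_fun_upd[OF I]) (auto simp: cube_def[symmetric])
qed

lemma final_alg:
  fixes Ng Vg Nf Vf D L :: real
  assumes "D > 0" "Vg \<ge> D" "Ng \<le> L\<^sup>2 * Nf" "Nf \<ge> 0" "Vf > 0"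
  shows "Ng / Vg \<le> 2 * L\<^sup>2 * Vf / D * (Nf / Vf)"
proof -
  have r: "2 * L\<^sup>2 * Vf / D * (Nf / Vf) = 2 * (L\<^sup>2 * Nf) / D" using assms(5) by (simp add: field_simps)
  have Vg: "Vg > 0" using assms by linarith
  have LN: "0 \<le> L\<^sup>2 * Nf" using assms(4) by simp
  show ?thesis
  proof (cases "Ng \<le> 0")
    case True
    then have "Ng / Vg \<le> 0" using Vg by (simp add: divide_nonpos_pos)
    also have "0 \<le> 2 * (L\<^sup>2 * Nf) / D" using LN assms(1) by simp
    finally show ?thesis using r by simp
  next
    case False
    then have "Ng / Vg \<le> Ng / D" using assms(1,2) by (intro divide_left_mono) auto
    also have "\<dots> \<le> (L\<^sup>2 * Nf) / D" using assms(1,3) by (intro divide_right_mono) auto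
    also have "\<dots> \<le> 2 * (L\<^sup>2 * Nf) / D" using LN assms(1) by (intro divide_right_mono) (auto simp: mult.commute)
    finally show ?thesis using r by simp
  qed
qed

theorem corollaryD5:
  fixes G :: "real \<Rightarrow> real \<Rightarrow> real" and L c :: real
    and n m i :: nat
    and f :: "(nat \<Rightarrow> real) \<Rightarrow> real"
    and h g :: "(nat \<Rightarrow> real) \<Rightarrow> (nat \<Rightarrow> real) \<Rightarrow> real"
  assumes Lc: "L \<ge> c" "c > 0"
    and G_lip: "\<And>u u0 v. \<bar>G u v - G u0 v\<bar> \<le> L * \<bar>u - u0\<bar>"
    and G_low: "\<And>u v. \<bar>G u v\<bar> \<ge> c * sqrt (u\<^sup>2 + v\<^sup>2)"
    and nm: "n \<ge> 1" "m \<ge> 1"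
    and i: "i \<in> {1..n}"
    and f_meas: "f \<in> borel_measurable (cube {1..n})"
    and f_L2: "integrable (cube {1..n}) (\<lambda>x. (f x)\<^sup>2)"
    and f_nonconst: "\<not> (\<exists>a. AE x in cube {1..n}. f x = a)"
    and h_meas: "(\<lambda>z. h (fst z) (snd z)) \<in> borel_measurable (cube ({1..n} - {i}) \<Otimes>\<^sub>M cube {1..m})"
    and h_L2: "integrable (cube ({1..n} - {i}) \<Otimes>\<^sub>M cube {1..m}) (\<lambda>z. (h (fst z) (snd z))\<^sup>2)"
    and g_meas: "(\<lambda>z. g (fst z) (snd z)) \<in> borel_measurable (cube {1..n} \<Otimes>\<^sub>M cube {1..m})"
    and g_L2: "integrable (cube {1..n} \<Otimes>\<^sub>M cube {1..m}) (\<lambda>z. (g (fst z) (snd z))\<^sup>2)"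
    and g_def: "\<And>x \<xi>. x \<in> space (cube {1..n}) \<Longrightarrow> \<xi> \<in> space (cube {1..m}) \<Longrightarrow>
                  g x \<xi> = G (f x) (h (restrict x ({1..n} - {i})) \<xi>)"
    and pos: "c\<^sup>2 * (variance (cube {1..n}) f
                + variance (cube ({1..n} - {i}) \<Otimes>\<^sub>M cube {1..m}) (\<lambda>z. h (fst z) (snd z)))
              - (\<integral>z. g (fst z) (snd z) \<partial>(cube {1..n} \<Otimes>\<^sub>M cube {1..m}))\<^sup>2 > 0"
  shows "sobolT2 n m i g \<le>
           2 * L\<^sup>2 * variance (cube {1..n}) f
           / (c\<^sup>2 * (variance (cube {1..n}) f
                + variance (cube ({1..n} - {i}) \<Otimes>\<^sub>M cube {1..m}) (\<lambda>z. h (fst z) (snd z)))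
              - (\<integral>z. g (fst z) (snd z) \<partial>(cube {1..n} \<Otimes>\<^sub>M cube {1..m}))\<^sup>2)
           * sobolT n i f"
proof -
  define J where "J = {1..n} - {i}"
  let ?U = unitI
  let ?Mn = "cube {1..n}"
  let ?Mm = "cube {1..m}"
  let ?MJ = "cube J"
  let ?P = "cube J \<Otimes>\<^sub>M cube {1..m}"
  let ?Q = "cube {1..n} \<Otimes>\<^sub>M cube {1..m}"
  have iJ: "i \<notin> J" and ins: "insert i J = {1..n}" and Jsub: "J \<subseteq> {1..n}"
    using i by (auto simp: J_def)
  interpret U: prob_space unitI by (rule unitI_prob)
  interpret PQ: pair_sigma_finite "cube {1..n}" "cube {1..m}" by (rule cube_psf)
  interpret PP: pair_sigma_finite "cube J" "cube {1..m}" by (rule cube_psf)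
  have L0: "L \<ge> 0" using Lc by linarith
  note [measurable] = f_meas g_meas
  have h_measJ[measurable]: "(\<lambda>z. h (fst z) (snd z)) \<in> borel_measurable ?P" using h_meas unfolding J_def .
  have h_L2J: "integrable ?P (\<lambda>z. (h (fst z) (snd z))\<^sup>2)" using h_L2 unfolding J_def .

  have gQ: "g (fst z) (snd z) = G (f (fst z)) (h (restrict (fst z) J) (snd z))" if "z \<in> space ?Q" for z
    using g_def[of "fst z" "snd z"] that by (auto simp: space_pair_measure J_def)
  have gsq_low: "(g (fst z) (snd z))\<^sup>2 \<ge> c\<^sup>2 * (f (fst z))\<^sup>2 + c\<^sup>2 * (h (restrict (fst z) J) (snd z))\<^sup>2"
    if "z \<in> space ?Q" for z
  proof -
    let ?u = "f (fst z)" and ?v = "h (restrict (fst z) J) (snd z)"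
    have "c * sqrt (?u\<^sup>2 + ?v\<^sup>2) \<le> \<bar>G ?u ?v\<bar>" by (rule G_low)
    moreover have "0 \<le> c * sqrt (?u\<^sup>2 + ?v\<^sup>2)" using Lc by simp
    ultimately have "(c * sqrt (?u\<^sup>2 + ?v\<^sup>2))\<^sup>2 \<le> \<bar>G ?u ?v\<bar>\<^sup>2" by (intro power_mono)
    moreover have "(c * sqrt (?u\<^sup>2 + ?v\<^sup>2))\<^sup>2 = c\<^sup>2 * (?u\<^sup>2 + ?v\<^sup>2)"
      by (simp add: power_mult_distrib)
    moreover have "\<bar>G ?u ?v\<bar>\<^sup>2 = (g (fst z) (snd z))\<^sup>2" using gQ[OF that] by simp
    ultimately show ?thesis by (simp add: distrib_left)
  qed

  have hr_meas[measurable]: "(\<lambda>z. h (restrict (fst z) J) (snd z)) \<in> borel_measurable ?Q"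
    using measurable_comp[OF restr_meas[OF Jsub, of "cube {1..m}"] h_measJ] by (simp add: comp_def)
  have fst_meas[measurable]: "(\<lambda>z. f (fst z)) \<in> borel_measurable ?Q" by measurable

  have fQ_int: "integrable ?Q (\<lambda>z. (f (fst z))\<^sup>2)"
    using marg(2)[of "\<lambda>x. (f x)\<^sup>2" "{1..n}" "{1..m}"] f_L2 by simp
  have gdiv_int: "integrable ?Q (\<lambda>z. (g (fst z) (snd z))\<^sup>2 / c\<^sup>2)" using g_L2 by simp
  have hrQ_int: "integrable ?Q (\<lambda>z. (h (restrict (fst z) J) (snd z))\<^sup>2)"
  proof (rule Bochner_Integration.integrable_bound[OF gdiv_int])
    show "(\<lambda>z. (h (restrict (fst z) J) (snd z))\<^sup>2) \<in> borel_measurable ?Q" by measurable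
    show "AE z in ?Q. norm ((h (restrict (fst z) J) (snd z))\<^sup>2) \<le> norm ((g (fst z) (snd z))\<^sup>2 / c\<^sup>2)"
    proof (rule AE_I2)
      fix z assume z: "z \<in> space ?Q"
      have "0 \<le> c\<^sup>2 * (f (fst z))\<^sup>2" by simp
      then have "c\<^sup>2 * (h (restrict (fst z) J) (snd z))\<^sup>2 \<le> (g (fst z) (snd z))\<^sup>2"
        using gsq_low[OF z] by linarith
      then have "(h (restrict (fst z) J) (snd z))\<^sup>2 \<le> (g (fst z) (snd z))\<^sup>2 / c\<^sup>2"
        using Lc by (subst pos_le_divide_eq) (auto simp: mult.commute)
      then show "norm ((h (restrict (fst z) J) (snd z))\<^sup>2) \<le> norm ((g (fst z) (snd z))\<^sup>2 / c\<^sup>2)"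
        by simp
    qed
  qed

  have hrQ_eq: "(\<integral>z. (h (restrict (fst z) J) (snd z))\<^sup>2 \<partial>?Q) = (\<integral>z. (h (fst z) (snd z))\<^sup>2 \<partial>?P)"
  proof -
    have "(\<integral>z. (h (restrict (fst z) J) (snd z))\<^sup>2 \<partial>?Q)
       = (\<integral>z. (\<integral>t. (h (restrict ((fst z)(i:=t)) J) (snd z))\<^sup>2 \<partial>unitI) \<partial>?P)"
      using T3B(3)[OF i hrQ_int] by (simp add: J_def)
    also have "\<dots> = (\<integral>z. (h (fst z) (snd z))\<^sup>2 \<partial>?P)"
    proof (rule Bochner_Integration.integral_cong[OF refl])
      fix z assume z: "z \<in> space ?P"
      then have "fst z \<in> space (cube J)" by (auto simp: space_pair_measure)
      then show "(\<integral>t. (h (restrict ((fst z)(i:=t)) J) (snd z))\<^sup>2 \<partial>unitI) = (h (fst z) (snd z))\<^sup>2"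
        using restr_upd[OF _ iJ] by (simp add: U.prob_space)
    qed
    finally show ?thesis .
  qed

  define Vf where "Vf = variance ?Mn f"
  define Vh where "Vh = variance ?P (\<lambda>z. h (fst z) (snd z))"
  define g0 where "g0 = (\<integral>z. g (fst z) (snd z) \<partial>?Q)"
  define D where "D = c\<^sup>2 * (Vf + Vh) - g0\<^sup>2"
  define Vg where "Vg = variance ?Q (\<lambda>z. g (fst z) (snd z))"
  have Dpos: "D > 0" using pos by (simp add: D_def Vf_def Vh_def g0_def J_def)
  have VgD: "Vg \<ge> D"
  proof -
    have "(\<integral>z. c\<^sup>2 * (f (fst z))\<^sup>2 + c\<^sup>2 * (h (restrict (fst z) J) (snd z))\<^sup>2 \<partial>?Q)
        \<le> (\<integral>z. (g (fst z) (snd z))\<^sup>2 \<partial>?Q)"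
      using fQ_int hrQ_int g_L2 gsq_low by (intro Bochner_Integration.integral_mono) auto
    moreover have "(\<integral>z. c\<^sup>2 * (f (fst z))\<^sup>2 + c\<^sup>2 * (h (restrict (fst z) J) (snd z))\<^sup>2 \<partial>?Q)
        = c\<^sup>2 * (\<integral>z. (f (fst z))\<^sup>2 \<partial>?Q) + c\<^sup>2 * (\<integral>z. (h (restrict (fst z) J) (snd z))\<^sup>2 \<partial>?Q)"
      using fQ_int hrQ_int by simp
    moreover have "(\<integral>z. (f (fst z))\<^sup>2 \<partial>?Q) = (\<integral>x. (f x)\<^sup>2 \<partial>?Mn)"
      using marg(1)[of "\<lambda>x. (f x)\<^sup>2" "{1..n}" "{1..m}"] f_meas by simp
    ultimately have "c\<^sup>2 * (\<integral>x. (f x)\<^sup>2 \<partial>?Mn) + c\<^sup>2 * (\<integral>z. (h (fst z) (snd z))\<^sup>2 \<partial>?P)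
        \<le> (\<integral>z. (g (fst z) (snd z))\<^sup>2 \<partial>?Q)" using hrQ_eq by simp
    moreover have "Vf \<le> (\<integral>x. (f x)\<^sup>2 \<partial>?Mn)" "Vh \<le> (\<integral>z. (h (fst z) (snd z))\<^sup>2 \<partial>?P)"
      by (simp_all add: Vf_def Vh_def variance_def)
    ultimately have "c\<^sup>2 * (Vf + Vh) \<le> (\<integral>z. (g (fst z) (snd z))\<^sup>2 \<partial>?Q)"
    proof -
      have "c\<^sup>2 * Vf \<le> c\<^sup>2 * (\<integral>x. (f x)\<^sup>2 \<partial>?Mn)" "c\<^sup>2 * Vh \<le> c\<^sup>2 * (\<integral>z. (h (fst z) (snd z))\<^sup>2 \<partial>?P)"
        using \<open>Vf \<le> _\<close> \<open>Vh \<le> _\<close> by (auto intro: mult_left_mono)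
      then show ?thesis using \<open>c\<^sup>2 * (\<integral>x. (f x)\<^sup>2 \<partial>?Mn) + _ \<le> _\<close> by (simp add: distrib_left)
    qed
    then show ?thesis by (simp add: D_def Vg_def variance_def g0_def)
  qed

  have Vfpos: "Vf > 0"
  proof -
    interpret Mn: prob_space "cube {1..n}" by (rule cube_prob)
    let ?\<mu> = "\<integral>x. f x \<partial>?Mn"
    have f_int: "integrable ?Mn f" by (rule Mn.square_integrable_imp_integrable[OF f_meas f_L2])
    have ve: "(\<integral>x. (f x - ?\<mu>)\<^sup>2 \<partial>?Mn) = Vf"
      using var_expand[OF cube_prob f_meas f_L2, of ?\<mu>] by (simp add: Vf_def variance_def)
    have i2: "integrable ?Mn (\<lambda>x. (f x - ?\<mu>)\<^sup>2)"
      using f_int f_L2 Mn.integrable_const[of "?\<mu>\<^sup>2"]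
      by (simp add: power2_diff mult.assoc
          del: Mn.integrable_const integrable_const)
    have "Vf \<noteq> 0"
    proof
      assume "Vf = 0"
      then have "AE x in ?Mn. (f x - ?\<mu>)\<^sup>2 = 0"
        using integral_nonneg_eq_0_iff_AE[OF i2] ve by simp
      then have "AE x in ?Mn. f x = ?\<mu>" by eventually_elim simp
      then show False using f_nonconst by blast
    qed
    moreover have "Vf \<ge> 0" using ve[symmetric] by simp
    ultimately show ?thesis by simp
  qed

  have gA: "AE z in ?P. integrable unitI (\<lambda>t. (g ((fst z)(i:=t)) (snd z))\<^sup>2)"
    unfolding J_def using T3B(1)[OF i g_L2] by simp
  have gA_int: "integrable ?P (\<lambda>z. \<integral>t. (g ((fst z)(i:=t)) (snd z))\<^sup>2 \<partial>unitI)"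
    unfolding J_def using T3B(2)[OF i g_L2] by simp
  have gA_eq: "(\<integral>z. (g (fst z) (snd z))\<^sup>2 \<partial>?Q) = (\<integral>z. (\<integral>t. (g ((fst z)(i:=t)) (snd z))\<^sup>2 \<partial>unitI) \<partial>?P)"
    unfolding J_def using T3B(3)[OF i g_L2] by simp
  have fa: "AE z in ?P. integrable unitI (\<lambda>t. (f ((fst z)(i:=t)))\<^sup>2)"
    unfolding J_def using T3B(1)[OF i fQ_int] by simp
  have fa_int: "integrable ?P (\<lambda>z. \<integral>t. (f ((fst z)(i:=t)))\<^sup>2 \<partial>unitI)"
    unfolding J_def using T3B(2)[OF i fQ_int] by simp
  have fa_eq: "(\<integral>z. (f (fst z))\<^sup>2 \<partial>?Q) = (\<integral>z. (\<integral>t. (f ((fst z)(i:=t)))\<^sup>2 \<partial>unitI) \<partial>?P)"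
    unfolding J_def using T3B(3)[OF i fQ_int] by simp
  have fQ_eq: "(\<integral>z. (f (fst z))\<^sup>2 \<partial>?Q) = (\<integral>x. (f x)\<^sup>2 \<partial>?Mn)"
    using marg(1)[of "\<lambda>x. (f x)\<^sup>2" "{1..n}" "{1..m}"] f_meas by simp

  have Phi: "(\<lambda>w. ((fst (fst w))(i := snd w), snd (fst w))) \<in> measurable (?P \<Otimes>\<^sub>M unitI) ?Q"
    unfolding J_def by (rule Phi_meas[OF i])
  have gjoint: "(\<lambda>w. g ((fst (fst w))(i := snd w)) (snd (fst w))) \<in> borel_measurable (?P \<Otimes>\<^sub>M unitI)"
    using measurable_comp[OF Phi g_meas] by (simp add: comp_def)
  have fjoint: "(\<lambda>w. f ((fst (fst w))(i := snd w))) \<in> borel_measurable (?P \<Otimes>\<^sub>M unitI)"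
    using measurable_comp[OF Phi fst_meas] by (simp add: comp_def)
  have B_meas: "(\<lambda>z. \<integral>t. g ((fst z)(i:=t)) (snd z) \<partial>unitI) \<in> borel_measurable ?P"
    using U.borel_measurable_lebesgue_integral[of "\<lambda>z t. g ((fst z)(i:=t)) (snd z)" ?P] gjoint
    by (simp add: split_beta')
  have bf_meas: "(\<lambda>z. \<integral>t. f ((fst z)(i:=t)) \<partial>unitI) \<in> borel_measurable ?P"
    using U.borel_measurable_lebesgue_integral[of "\<lambda>z t. f ((fst z)(i:=t))" ?P] fjoint
    by (simp add: split_beta')
  have upd2: "(\<lambda>w. (fst w)(i := snd w)) \<in> measurable (?MJ \<Otimes>\<^sub>M unitI) ?Mn"
    unfolding J_def by (rule upd_meas2[OF i])
  have b_meas: "(\<lambda>y. \<integral>t. f (y(i:=t)) \<partial>unitI) \<in> borel_measurable ?MJ"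
    using U.borel_measurable_lebesgue_integral[of "\<lambda>y t. f (y(i:=t))" ?MJ] measurable_comp[OF upd2 f_meas]
    by (simp add: split_beta' comp_def)

  have pw: "AE z in ?P.
      (\<integral>t. (g ((fst z)(i:=t)) (snd z))\<^sup>2 \<partial>unitI) - (\<integral>t. g ((fst z)(i:=t)) (snd z) \<partial>unitI)\<^sup>2
        \<le> L\<^sup>2 * ((\<integral>t. (f ((fst z)(i:=t)))\<^sup>2 \<partial>unitI) - (\<integral>t. f ((fst z)(i:=t)) \<partial>unitI)\<^sup>2)
      \<and> 0 \<le> (\<integral>t. (f ((fst z)(i:=t)))\<^sup>2 \<partial>unitI) - (\<integral>t. f ((fst z)(i:=t)) \<partial>unitI)\<^sup>2
      \<and> 0 \<le> (\<integral>t. (g ((fst z)(i:=t)) (snd z))\<^sup>2 \<partial>unitI) - (\<integral>t. g ((fst z)(i:=t)) (snd z) \<partial>unitI)\<^sup>2"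
    using gA fa AE_space
  proof eventually_elim
    case (elim z)
    note z = elim(3)
    have y: "fst z \<in> space ?MJ" and xi: "snd z \<in> space ?Mm" using z by (auto simp: space_pair_measure)
    let ?\<phi> = "\<lambda>t. f ((fst z)(i:=t))"
    let ?\<psi> = "\<lambda>t. g ((fst z)(i:=t)) (snd z)"
    let ?v = "h (fst z) (snd z)"
    have m\<phi>: "?\<phi> \<in> borel_measurable unitI"
      using measurable_comp[OF measurable_Pair1'[OF z] fjoint] by (simp add: comp_def)
    have m\<psi>: "?\<psi> \<in> borel_measurable unitI"
      using measurable_comp[OF measurable_Pair1'[OF z] gjoint] by (simp add: comp_def)
    have psi_eq: "?\<psi> t = G (?\<phi> t) ?v" if t: "t \<in> space unitI" for t
    proof -
      have "(fst z)(i:=t) \<in> space ?Mn"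
        using upd_space[OF y, of t i] t ins by (simp add: space_unitI)
      moreover have "restrict ((fst z)(i:=t)) ({1..n} - {i}) = fst z"
        using restr_upd[OF y iJ] by (simp add: J_def)
      ultimately show ?thesis using g_def[OF _ xi] by simp
    qed
    have bnd: "\<bar>?\<psi> t - G (\<integral>s. ?\<phi> s \<partial>unitI) ?v\<bar> \<le> L * \<bar>?\<phi> t - (\<integral>s. ?\<phi> s \<partial>unitI)\<bar>"
      if t: "t \<in> space unitI" for t
      using psi_eq[OF t] G_lip by simp
    show ?case using core[OF unitI_prob m\<phi> m\<psi> elim(2) elim(1) L0 bnd] by simp
  qed

  have B2_int: "integrable ?P (\<lambda>z. (\<integral>t. g ((fst z)(i:=t)) (snd z) \<partial>unitI)\<^sup>2)"
  proof (rule Bochner_Integration.integrable_bound[OF gA_int])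
    show "(\<lambda>z. (\<integral>t. g ((fst z)(i:=t)) (snd z) \<partial>unitI)\<^sup>2) \<in> borel_measurable ?P"
      using B_meas by measurable
    show "AE z in ?P. norm ((\<integral>t. g ((fst z)(i:=t)) (snd z) \<partial>unitI)\<^sup>2)
        \<le> norm (\<integral>t. (g ((fst z)(i:=t)) (snd z))\<^sup>2 \<partial>unitI)"
      using pw by eventually_elim auto
  qed
  have b2_int: "integrable ?P (\<lambda>z. (\<integral>t. f ((fst z)(i:=t)) \<partial>unitI)\<^sup>2)"
  proof (rule Bochner_Integration.integrable_bound[OF fa_int])
    show "(\<lambda>z. (\<integral>t. f ((fst z)(i:=t)) \<partial>unitI)\<^sup>2) \<in> borel_measurable ?P"
      using bf_meas by measurable
    show "AE z in ?P. norm ((\<integral>t. f ((fst z)(i:=t)) \<partial>unitI)\<^sup>2)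
        \<le> norm (\<integral>t. (f ((fst z)(i:=t)))\<^sup>2 \<partial>unitI)"
      using pw by eventually_elim auto
  qed
  have b2_eq: "(\<integral>y. (\<integral>t. f (y(i:=t)) \<partial>unitI)\<^sup>2 \<partial>?MJ) = (\<integral>z. (\<integral>t. f ((fst z)(i:=t)) \<partial>unitI)\<^sup>2 \<partial>?P)"
  proof -
    have "(\<lambda>y. (\<integral>t. f (y(i:=t)) \<partial>unitI)\<^sup>2) \<in> borel_measurable ?MJ" using b_meas by measurable
    from marg(1)[OF this, of "{1..m}"] show ?thesis by simp
  qed

  define Ng where "Ng = (\<integral>z. (g (fst z) (snd z))\<^sup>2 \<partial>?Q) - (\<integral>z. (\<integral>t. g ((fst z)(i:=t)) (snd z) \<partial>unitI)\<^sup>2 \<partial>?P)"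
  define Nf where "Nf = (\<integral>x. (f x)\<^sup>2 \<partial>?Mn) - (\<integral>y. (\<integral>t. f (y(i:=t)) \<partial>unitI)\<^sup>2 \<partial>?MJ)"
  have Ng_eq: "Ng = (\<integral>z. (\<integral>t. (g ((fst z)(i:=t)) (snd z))\<^sup>2 \<partial>unitI) - (\<integral>t. g ((fst z)(i:=t)) (snd z) \<partial>unitI)\<^sup>2 \<partial>?P)"
    unfolding Ng_def gA_eq using gA_int B2_int by simp
  have Nf_eq: "Nf = (\<integral>z. (\<integral>t. (f ((fst z)(i:=t)))\<^sup>2 \<partial>unitI) - (\<integral>t. f ((fst z)(i:=t)) \<partial>unitI)\<^sup>2 \<partial>?P)"
    unfolding Nf_def b2_eq fQ_eq[symmetric] fa_eq using fa_int b2_int by simp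
  have Nf0: "Nf \<ge> 0"
    unfolding Nf_eq by (rule integral_nonneg_AE, rule AE_mp[OF pw], rule AE_I2) simp
  have NgNf: "Ng \<le> L\<^sup>2 * Nf"
  proof -
    have "Ng \<le> (\<integral>z. L\<^sup>2 * ((\<integral>t. (f ((fst z)(i:=t)))\<^sup>2 \<partial>unitI) - (\<integral>t. f ((fst z)(i:=t)) \<partial>unitI)\<^sup>2) \<partial>?P)"
      unfolding Ng_eq
      by (rule integral_mono_AE) (use gA_int B2_int fa_int b2_int pw in auto)
    also have "\<dots> = L\<^sup>2 * Nf" unfolding Nf_eq by simp
    finally show ?thesis .
  qed

  have main: "Ng / Vg \<le> 2 * L\<^sup>2 * Vf / D * (Nf / Vf)"
    by (rule final_alg[OF Dpos VgD NgNf Nf0 Vfpos])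
  have e1: "sobolT2 n m i g = Ng / Vg"
    unfolding sobolT2_def Ng_def Vg_def J_def ..
  have e2: "sobolT n i f = Nf / Vf"
    unfolding sobolT_def Nf_def Vf_def J_def ..
  show ?thesis using main unfolding e1 e2 D_def Vf_def Vh_def g0_def J_def .
qed

end
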